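(* Let $D\ge1$, let $Q_D$ be the $D$-dimensional hypercube on $X=\{0,1\}^D$ with adjacency matrix $A$, and let $E_1V$ be the eigenspace of $A$ in $V=\mathbb{R}^X$ for the eigenvalue $D-2$. Every antisymmetric $A$-like matrix $B$ leaves $E_1V$ invariant, and the restriction map $B\mapsto B|_{E_1V}$, from the space of antisymmetric $A$-like matrices to the space of linear maps $T:E_1V\to E_1V$ satisfying $\langle Tu,w\rangle=-\langle u,Tw\rangle$ for all $u,w\in E_1V$, is injective.
   Context: $Q_D$ is the graph with vertex set $X=\{0,1\}^D$, two vertices adjacent iff they differ in exactly one coordinate. Matrices are real with rows and columns indexed by $X$ and act on $V=\mathbb{R}^X$, with inner product $\langle u,w\rangle=u^tw$. A matrix $B$ is $A$-like if $BA=AB$ and $B_{xy}=0$ for all $x,y\in X$ that are neither equal nor adjacent; it is antisymmetric if $B^t=-B$. *)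

theory Defs
  imports Complex_Main "HOL-Library.FuncSet"
begin

text \<open>Vertex set X = {0,1}^D, encoded as boolean lists of length D.
  Vectors in V = R^X and matrices indexed by X are real functions that vanish
  outside X.\<close>

definition cube :: "nat \<Rightarrow> bool list set" where
  "cube D = {xs. length xs = D}"

definition adj :: "nat \<Rightarrow> bool list \<Rightarrow> bool list \<Rightarrow> bool" where
  "adj D x y \<longleftrightarrow> x \<in> cube D \<and> y \<in> cube D \<and> card {i. i < D \<and> x ! i \<noteq> y ! i} = 1"

definition adjM :: "nat \<Rightarrow> bool list \<Rightarrow> bool list \<Rightarrow> real" where
  "adjM D x y = (if adj D x y then 1 else 0)"

definition is_vec :: "nat \<Rightarrow> (bool list \<Rightarrow> real) \<Rightarrow> bool" where
  "is_vec D v \<longleftrightarrow> (\<forall>x. x \<notin> cube D \<longrightarrow> v x = 0)"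

definition is_mat :: "nat \<Rightarrow> (bool list \<Rightarrow> bool list \<Rightarrow> real) \<Rightarrow> bool" where
  "is_mat D B \<longleftrightarrow> (\<forall>x y. x \<notin> cube D \<or> y \<notin> cube D \<longrightarrow> B x y = 0)"

definition matmul :: "nat \<Rightarrow> (bool list \<Rightarrow> bool list \<Rightarrow> real) \<Rightarrow> (bool list \<Rightarrow> bool list \<Rightarrow> real)
    \<Rightarrow> bool list \<Rightarrow> bool list \<Rightarrow> real" where
  "matmul D B C x y = (\<Sum>z\<in>cube D. B x z * C z y)"

definition mvec :: "nat \<Rightarrow> (bool list \<Rightarrow> bool list \<Rightarrow> real) \<Rightarrow> (bool list \<Rightarrow> real) \<Rightarrow> bool list \<Rightarrow> real" where
  "mvec D B v x = (\<Sum>y\<in>cube D. B x y * v y)"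

definition inner_X :: "nat \<Rightarrow> (bool list \<Rightarrow> real) \<Rightarrow> (bool list \<Rightarrow> real) \<Rightarrow> real" where
  "inner_X D u w = (\<Sum>x\<in>cube D. u x * w x)"

definition A_like :: "nat \<Rightarrow> (bool list \<Rightarrow> bool list \<Rightarrow> real) \<Rightarrow> bool" where
  "A_like D B \<longleftrightarrow> is_mat D B \<and> matmul D B (adjM D) = matmul D (adjM D) B \<and>
     (\<forall>x\<in>cube D. \<forall>y\<in>cube D. x \<noteq> y \<and> \<not> adj D x y \<longrightarrow> B x y = 0)"

definition antisymmetric_mat :: "(bool list \<Rightarrow> bool list \<Rightarrow> real) \<Rightarrow> bool" where
  "antisymmetric_mat B \<longleftrightarrow> (\<forall>x y. B y x = - B x y)"

definition E1 :: "nat \<Rightarrow> (bool list \<Rightarrow> real) set" where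
  "E1 D = {v. is_vec D v \<and> mvec D (adjM D) v = (\<lambda>x. (real D - 2) * v x)}"

end

theory Submission
  imports Defs
begin

lemma fin_cube: "finite (cube D)"
proof -
  have "cube D = {xs. set xs \<subseteq> (UNIV::bool set) \<and> length xs = D}" by (auto simp: cube_def)
  then show ?thesis using finite_lists_length_eq[of "UNIV::bool set" D] by simp
qed

definition flip :: "bool list \<Rightarrow> nat \<Rightarrow> bool list" where
  "flip x j = x[j := \<not> x ! j]"

lemma flip_cube: "x \<in> cube D \<Longrightarrow> flip x j \<in> cube D"
  by (simp add: cube_def flip_def)

lemma adj_sym: "adj D x y = adj D y x"
proof -
  have "{i. i < D \<and> x ! i \<noteq> y ! i} = {i. i < D \<and> y ! i \<noteq> x ! i}" by auto
  then show ?thesis unfolding adj_def by auto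
qed

lemma adj_flip: assumes "x \<in> cube D" "j < D" shows "adj D x (flip x j)"
proof -
  have "{k. k < D \<and> x ! k \<noteq> flip x j ! k} = {j}"
    using assms by (auto simp: flip_def cube_def nth_list_update)
  then show ?thesis using assms flip_cube[OF assms(1)] unfolding adj_def by simp
qed

lemma adj_cases: assumes "adj D x y" shows "\<exists>j<D. y = flip x j"
proof -
  have c: "card {i. i < D \<and> x ! i \<noteq> y ! i} = 1" and xy: "x \<in> cube D" "y \<in> cube D"
    using assms by (auto simp: adj_def)
  then obtain j where j: "{i. i < D \<and> x ! i \<noteq> y ! i} = {j}" by (meson card_1_singletonE)
  then have jD: "j < D" and jd: "x ! j \<noteq> y ! j" by auto
  have other: "\<And>k. k < D \<Longrightarrow> k \<noteq> j \<Longrightarrow> x ! k = y ! k" using j by blast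
  have "y = flip x j"
  proof (rule nth_equalityI)
    show "length y = length (flip x j)" using xy by (simp add: cube_def flip_def)
    fix k assume "k < length y"
    then have "k < D" using xy by (simp add: cube_def)
    then show "y ! k = flip x j ! k"
      using xy jd other[of k] jD by (cases "k = j") (auto simp: flip_def cube_def nth_list_update)
  qed
  then show ?thesis using jD by blast
qed

lemma flip_inj: assumes "x \<in> cube D" "i < D" "j < D" "flip x i = flip x j" shows "i = j"
proof (rule ccontr)
  assume "i \<noteq> j"
  then have "flip x i ! i \<noteq> flip x j ! i" using assms(1-3) by (simp add: flip_def cube_def nth_list_update)
  then show False using assms(4) by simp
qed

lemma neighbors: assumes "x \<in> cube D" shows "{y \<in> cube D. adj D x y} = flip x ` {..<D}"
proof
  show "{y \<in> cube D. adj D x y} \<subseteq> flip x ` {..<D}" using adj_cases by blast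
  show "flip x ` {..<D} \<subseteq> {y \<in> cube D. adj D x y}" using assms adj_flip flip_cube by auto
qed

lemma degree: assumes "x \<in> cube D" shows "card {y \<in> cube D. adj D x y} = D"
proof -
  have "inj_on (flip x) {..<D}" using flip_inj[OF assms] by (auto simp: inj_on_def)
  then show ?thesis using neighbors[OF assms] card_image by fastforce
qed

definition fv :: "nat \<Rightarrow> nat \<Rightarrow> bool list \<Rightarrow> real" where
  "fv D i x = (if x \<in> cube D then (if x ! i then -1 else 1) else 0)"

lemma fv_adj: assumes "adj D x y" "i < D"
  shows "fv D i y = fv D i x * (1 - 2 * (if y = flip x i then 1 else 0))"
proof -
  have xy: "x \<in> cube D" "y \<in> cube D" using assms by (auto simp: adj_def)
  obtain j where j: "j < D" "y = flip x j" using adj_cases[OF assms(1)] by blast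
  show ?thesis
  proof (cases "j = i")
    case True
    then show ?thesis using xy j assms(2) by (auto simp: fv_def flip_def cube_def nth_list_update)
  next
    case False
    then have "y \<noteq> flip x i" using flip_inj[OF xy(1) assms(2) j(1)] j by auto
    moreover have "y ! i = x ! i" using False j xy by (simp add: flip_def cube_def nth_list_update)
    ultimately show ?thesis using xy by (simp add: fv_def)
  qed
qed

lemma sum_delta_mult: "finite S \<Longrightarrow> (\<Sum>y\<in>S. g y * (if y = a then 1 else 0)) = (if a \<in> S then g a else (0::real))"
  by (simp add: sum.delta' if_distrib cong: if_cong)

lemma adjM_sum: assumes "x \<in> cube D" shows "(\<Sum>y\<in>cube D. adjM D x y) = real D"
proof -
  have "(\<Sum>y\<in>cube D. adjM D x y) = (\<Sum>y\<in>{y \<in> cube D. adj D x y}. 1)"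
    by (simp add: adjM_def sum.inter_filter[symmetric] fin_cube)
  also have "\<dots> = real D" using degree[OF assms] by simp
  finally show ?thesis .
qed

lemma fv_E1: assumes "i < D" shows "fv D i \<in> E1 D"
proof -
  have "mvec D (adjM D) (fv D i) x = (real D - 2) * fv D i x" for x
  proof (cases "x \<in> cube D")
    case False
    then show ?thesis by (simp add: mvec_def adjM_def adj_def fv_def)
  next
    case True
    have "mvec D (adjM D) (fv D i) x =
       (\<Sum>y\<in>cube D. adjM D x y * (fv D i x * (1 - 2 * (if y = flip x i then 1 else 0))))"
      unfolding mvec_def by (rule sum.cong) (auto simp: adjM_def fv_adj assms)
    also have "\<dots> = fv D i x * (\<Sum>y\<in>cube D. adjM D x y)
        - 2 * fv D i x * (\<Sum>y\<in>cube D. adjM D x y * (if y = flip x i then 1 else 0))"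
      by (simp add: algebra_simps sum_distrib_left sum_subtractf)
    also have "\<dots> = (real D - 2) * fv D i x"
      using True assms adjM_sum[OF True] flip_cube[OF True, of i] adj_flip[OF True assms]
      by (simp add: sum_delta_mult fin_cube adjM_def algebra_simps)
    finally show ?thesis .
  qed
  then show ?thesis by (auto simp: E1_def is_vec_def fv_def)
qed

lemma rowsum: assumes "A_like D B" "antisymmetric_mat B" "x \<in> cube D"
  shows "(\<Sum>y\<in>cube D. B x y) = 0"
proof -
  have "matmul D B (adjM D) x x = matmul D (adjM D) B x x" using assms(1) by (simp add: A_like_def)
  then have e: "(\<Sum>z\<in>cube D. B x z * adjM D z x) = (\<Sum>z\<in>cube D. adjM D x z * B z x)"
    by (simp add: matmul_def)
  have asym: "\<And>a b. B a b = - B b a" using assms(2) unfolding antisymmetric_mat_def by metis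
  have am: "\<And>a b. adjM D a b = adjM D b a" by (simp add: adjM_def adj_sym)
  have "(\<Sum>z\<in>cube D. adjM D x z * B z x) = (\<Sum>z\<in>cube D. - (B x z * adjM D z x))"
    by (rule sum.cong) (simp_all add: asym[of _ x] am[of x])
  also have "\<dots> = - (\<Sum>z\<in>cube D. B x z * adjM D z x)" by (simp add: sum_negf)
  finally have "(\<Sum>z\<in>cube D. adjM D x z * B z x) = - (\<Sum>z\<in>cube D. B x z * adjM D z x)" .
  with e have s: "(\<Sum>z\<in>cube D. B x z * adjM D z x) = 0" by simp
  have Bxx: "B x x = 0" using asym[of x x] by simp
  have zer: "\<And>y. y \<in> cube D \<Longrightarrow> x \<noteq> y \<Longrightarrow> \<not> adj D x y \<Longrightarrow> B x y = 0"
    using assms(1,3) unfolding A_like_def by blast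
  have "(\<Sum>z\<in>cube D. B x z * adjM D z x) = (\<Sum>y\<in>cube D. B x y)"
  proof (rule sum.cong)
    fix z assume z: "z \<in> cube D"
    show "B x z * adjM D z x = B x z"
    proof (cases "adj D x z")
      case True then show ?thesis by (simp add: adjM_def adj_sym[of D z x])
    next
      case False then show ?thesis using zer[OF z] Bxx by (cases "x = z") auto
    qed
  qed simp
  with s show ?thesis by simp
qed

lemma B_fv: assumes "A_like D B" "antisymmetric_mat B" "x \<in> cube D" "i < D"
  shows "mvec D B (fv D i) x = - 2 * fv D i x * B x (flip x i)"
proof -
  have "B x x = - B x x" using assms(2) unfolding antisymmetric_mat_def by blast
  then have Bxx: "B x x = 0" by simp
  have "mvec D B (fv D i) x =
       (\<Sum>y\<in>cube D. B x y * (fv D i x * (1 - 2 * (if y = flip x i then 1 else 0))))"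
    unfolding mvec_def
  proof (rule sum.cong)
    fix y assume y: "y \<in> cube D"
    show "B x y * fv D i y = B x y * (fv D i x * (1 - 2 * (if y = flip x i then 1 else 0)))"
    proof (cases "B x y = 0")
      case False
      then have "x \<noteq> y" using Bxx by auto
      then have "adj D x y" using False assms(1,3) y by (auto simp: A_like_def)
      then show ?thesis using fv_adj assms(4) by simp
    qed simp
  qed simp
  also have "\<dots> = fv D i x * (\<Sum>y\<in>cube D. B x y)
      - 2 * fv D i x * (\<Sum>y\<in>cube D. B x y * (if y = flip x i then 1 else 0))"
    by (simp add: algebra_simps sum_distrib_left sum_subtractf)
  also have "\<dots> = - 2 * fv D i x * B x (flip x i)"
    using rowsum[OF assms(1-3)] flip_cube[OF assms(3), of i] by (simp add: sum_delta_mult fin_cube)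
  finally show ?thesis .
qed

lemma mvec_assoc: "mvec D (matmul D M N) v x = mvec D M (mvec D N v) x"
proof -
  have "mvec D (matmul D M N) v x = (\<Sum>y\<in>cube D. \<Sum>z\<in>cube D. M x z * N z y * v y)"
    unfolding mvec_def matmul_def by (simp add: sum_distrib_right)
  also have "\<dots> = (\<Sum>z\<in>cube D. \<Sum>y\<in>cube D. M x z * N z y * v y)" by (rule sum.swap)
  also have "\<dots> = mvec D M (mvec D N v) x"
    unfolding mvec_def by (simp add: sum_distrib_left mult.assoc)
  finally show ?thesis .
qed

lemma mvec_scale: "mvec D M (\<lambda>x. c * v x) x = c * mvec D M v x"
  unfolding mvec_def by (simp add: sum_distrib_left algebra_simps)

theorem lemma9p2:
  fixes D :: nat
  assumes "D \<ge> 1"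
  shows "(\<forall>B. A_like D B \<and> antisymmetric_mat B \<longrightarrow>
            (\<forall>v\<in>E1 D. mvec D B v \<in> E1 D) \<and>
            (\<forall>u\<in>E1 D. \<forall>w\<in>E1 D. inner_X D (mvec D B u) w = - inner_X D u (mvec D B w)))
       \<and> inj_on (\<lambda>B. restrict (mvec D B) (E1 D)) {B. A_like D B \<and> antisymmetric_mat B}"
proof (intro conjI allI impI ballI)
  fix B assume B: "A_like D B \<and> antisymmetric_mat B"
  {
    fix v assume v: "v \<in> E1 D"
    have iv: "is_vec D (mvec D B v)" using B by (auto simp: is_vec_def mvec_def A_like_def is_mat_def)
    have "mvec D (adjM D) (mvec D B v) x = (real D - 2) * mvec D B v x" for x
    proof -
      have "mvec D (adjM D) (mvec D B v) x = mvec D (matmul D (adjM D) B) v x" by (simp add: mvec_assoc)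
      also have "\<dots> = mvec D (matmul D B (adjM D)) v x" using B by (simp add: A_like_def)
      also have "\<dots> = mvec D B (mvec D (adjM D) v) x" by (simp add: mvec_assoc)
      also have "\<dots> = (real D - 2) * mvec D B v x" using v by (simp add: E1_def mvec_scale)
      finally show ?thesis .
    qed
    then show "mvec D B v \<in> E1 D" using iv by (simp add: E1_def fun_eq_iff)
  }
  fix u w
  have "inner_X D (mvec D B u) w = (\<Sum>x\<in>cube D. \<Sum>y\<in>cube D. B x y * u y * w x)"
    by (simp add: inner_X_def mvec_def sum_distrib_right)
  also have "\<dots> = (\<Sum>y\<in>cube D. \<Sum>x\<in>cube D. B x y * u y * w x)" by (rule sum.swap)
  also have "\<dots> = (\<Sum>y\<in>cube D. \<Sum>x\<in>cube D. - (u y * (B y x * w x)))"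
  proof (intro sum.cong refl)
    fix y x
    have "B x y = - B y x" using B unfolding antisymmetric_mat_def by metis
    then show "B x y * u y * w x = - (u y * (B y x * w x))" by simp
  qed
  also have "\<dots> = - (\<Sum>y\<in>cube D. \<Sum>x\<in>cube D. u y * (B y x * w x))"
    by (simp add: sum_negf)
  also have "\<dots> = - inner_X D u (mvec D B w)"
    by (simp add: inner_X_def mvec_def sum_distrib_left)
  finally show "inner_X D (mvec D B u) w = - inner_X D u (mvec D B w)" .
next
  show "inj_on (\<lambda>B. restrict (mvec D B) (E1 D)) {B. A_like D B \<and> antisymmetric_mat B}"
  proof (rule inj_onI)
    fix B1 B2 assume B1: "B1 \<in> {B. A_like D B \<and> antisymmetric_mat B}"
      and B2: "B2 \<in> {B. A_like D B \<and> antisymmetric_mat B}"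
      and eq: "restrict (mvec D B1) (E1 D) = restrict (mvec D B2) (E1 D)"
    have ev: "mvec D B1 v = mvec D B2 v" if "v \<in> E1 D" for v
      using fun_cong[OF eq, of v] that by simp
    have z: "B x x = 0" if "antisymmetric_mat B" for B :: "bool list \<Rightarrow> bool list \<Rightarrow> real" and x
    proof -
      have "B x x = - B x x" using that unfolding antisymmetric_mat_def by blast
      then show ?thesis by simp
    qed
    show "B1 = B2"
    proof (intro ext)
      fix x y
      show "B1 x y = B2 x y"
      proof (cases "x \<in> cube D \<and> y \<in> cube D")
        case False
        then show ?thesis using B1 B2 by (auto simp: A_like_def is_mat_def)
      next
        case True
        show ?thesis
        proof (cases "adj D x y")
          case False
          show ?thesis
          proof (cases "x = y")
            case True
            then show ?thesis using B1 B2 z[of B1 y] z[of B2 y] by simp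
          next
            case ne: False
            then show ?thesis using B1 B2 True False by (auto simp: A_like_def)
          qed
        next
          case adj: True
          obtain i where i: "i < D" "y = flip x i" using adj_cases[OF adj] by blast
          have "mvec D B1 (fv D i) x = mvec D B2 (fv D i) x" using ev[OF fv_E1[OF i(1)]] by simp
          then have "- 2 * fv D i x * B1 x y = - 2 * fv D i x * B2 x y"
            using B_fv[of D B1 x i] B_fv[of D B2 x i] B1 B2 True i by auto
          moreover have "fv D i x \<noteq> 0" using True by (simp add: fv_def)
          ultimately show ?thesis by simp
        qed
      qed
    qed
  qed
qed

end
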